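(* Let $g$ be a symplectic potential, $y=\partial g/\partial x$, $h=x\cdot y-g$, $X_g=-\sum_jy_j\partial_{\theta_j}$, and let $\hat g=i\nabla_{X_g}+g$ be its prequantum operator, acting on sections $f\mathbbm 1$ over $\check X_P$ by $\hat g(f\mathbbm1)=(iX_gf-hf)\mathbbm 1$; set $e^{\hat g}:=\sum_k\frac1{k!}\hat g^k$. Let $\Theta=d\theta_1\wedge\cdots\wedge d\theta_n$ and let $e^{i\mathcal L_{X_g}}$ act on half-forms by $e^{i\mathcal L_{X_g}}\sqrt{d\Theta}:=\sqrt{dZ}$. Let $\mathcal A_P=\operatorname{span}_{\mathbb C}\{e^{im\cdot\theta}:m\in P\cap\mathbb Z^n\}$ and $\mathcal H_{\mathcal P_g}=\operatorname{span}_{\mathbb C}\{\sigma^m:m\in P\cap\mathbb Z^n\}$, where $\sigma^m=w^me^{-h}\mathbbm1\otimes\sqrt{dZ}$. Then $e^{\hat g}\otimes e^{i\mathcal L_{X_g}}:\mathcal A_P\,\mathbbm 1\otimes\sqrt{d\Theta}\to\mathcal H_{\mathcal P_g}$ is an isomorphism, sending $e^{im\cdot\theta}\mathbbm1\otimes\sqrt{d\Theta}$ to $\sigma^m$ for every $m\in P\cap\mathbb Z^n$.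
   Context: Let $P=\{x:\ell_j(x)=\langle\nu_j,x\rangle+\lambda_j\ge0,\ j=1,\dots,r\}$ be a Delzant polytope with $\lambda_j\in\frac12+\mathbb Z$ and interior $\check P$; $(X_P,\omega)$ the associated compact symplectic toric manifold, moment map $\mu$, toric divisors $D_j$, action-angle coordinates $(x,\theta)$ on $\check X_P=\mu^{-1}(\check P)$ with $\omega=\sum dx^j\wedge d\theta_j$. A symplectic potential is $g=\frac12\sum\ell_j\log\ell_j+\varphi$, $\varphi\in C^\infty(P)$, with positive definite Hessian on $\check P$ and $\det H_g=(\alpha\prod\ell_j)^{-1}$, $\alpha>0$ smooth on $P$; it gives a toric Kähler structure $I_g$ with holomorphic coordinates $z_j=y_j+i\theta_j$ on $\check X_P$, $w^m=e^{m\cdot(y+i\theta)}$, and $dZ=dz_1\wedge\cdots\wedge dz_n$ (the $I_g$-meromorphic section of $K_{X_P}$ with divisor $-(D_1+\cdots+D_r)$). $L$ is the half-form corrected prequantum line bundle ($c_1(L)=[\omega/2\pi]-c_1(X_P)/2$, connection of curvature $-i(\omega-\frac12\rho)$), whose sections over $\check X_P$ are written $f\,\mathbbm1\otimes\sqrt{\cdot}$ with $\mathbbm 1$ a unitary section of a prequantum factor satisfying $\nabla\mathbbm1=-i\sum x^jd\theta_j\,\mathbbm1$ and $\sqrt{\cdot}$ a multivalued half-form factor. The sections $\sigma^m$, $m\in P\cap\mathbb Z^n$, form a basis of $H^0(X_P,L)$, the Kähler quantization $\mathcal H_{\mathcal P_g}$; $e^{iX_g}f:=\sum_k\frac{i^k}{k!}X_g^kf$.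 *)

theory Defs
  imports "HOL-Analysis.Analysis"
begin

definition aff :: "(nat \<Rightarrow> real^'n) \<Rightarrow> (nat \<Rightarrow> real) \<Rightarrow> nat \<Rightarrow> real^'n \<Rightarrow> real" where
  "aff \<nu> lam j x = \<nu> j \<bullet> x + lam j"

definition polytope :: "nat \<Rightarrow> (nat \<Rightarrow> real^'n) \<Rightarrow> (nat \<Rightarrow> real) \<Rightarrow> (real^'n) set" where
  "polytope r \<nu> lam = {x. \<forall>j<r. aff \<nu> lam j x \<ge> 0}"

definition int_vec :: "real^'n \<Rightarrow> bool" where
  "int_vec v \<longleftrightarrow> (\<forall>i. v $ i \<in> \<int>)"

text \<open>Delzant polytope: compact with nonempty interior, each of the r inequalities cuts out a
  facet, and at every point the normals of the facets through that point are part of a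
  Z-basis of Z^n (equivalently: the polytope is simple, rational and smooth).\<close>

definition delzant :: "nat \<Rightarrow> (nat \<Rightarrow> real^'n) \<Rightarrow> (nat \<Rightarrow> real) \<Rightarrow> bool" where
  "delzant r \<nu> lam \<longleftrightarrow>
     bounded (polytope r \<nu> lam) \<and> interior (polytope r \<nu> lam) \<noteq> {} \<and>
     (\<forall>j<r. int_vec (\<nu> j)) \<and>
     (\<forall>j<r. \<exists>x\<in>polytope r \<nu> lam. aff \<nu> lam j x = 0 \<and> (\<forall>k<r. k \<noteq> j \<longrightarrow> aff \<nu> lam k x > 0)) \<and>
     (\<forall>v\<in>polytope r \<nu> lam. \<exists>B :: 'n \<Rightarrow> real^'n.
        (\<forall>i. int_vec (B i)) \<and> \<bar>det (\<chi> i. B i)\<bar> = 1 \<and>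
        inj_on \<nu> {j. j < r \<and> aff \<nu> lam j v = 0} \<and>
        (\<forall>j<r. aff \<nu> lam j v = 0 \<longrightarrow> \<nu> j \<in> range B))"

definition smooth_on :: "(real^'n) set \<Rightarrow> (real^'n \<Rightarrow> real) \<Rightarrow> bool" where
  "smooth_on U f \<longleftrightarrow> open U \<and> (\<exists>D :: 'n list \<Rightarrow> real^'n \<Rightarrow> real.
      (\<forall>x\<in>U. D [] x = f x) \<and>
      (\<forall>is i. \<forall>x\<in>U. ((\<lambda>t. D is (x + t *\<^sub>R axis i 1)) has_real_derivative D (i # is) x) (at 0)) \<and>
      (\<forall>is. continuous_on U (D is)))"

definition smooth_on_closed :: "(real^'n) set \<Rightarrow> (real^'n \<Rightarrow> real) \<Rightarrow> bool" where
  "smooth_on_closed S f \<longleftrightarrow> (\<exists>U F. S \<subseteq> U \<and> smooth_on U F \<and> (\<forall>x\<in>S. F x = f x))"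

definition pd :: "'n \<Rightarrow> (real^'n \<Rightarrow> real) \<Rightarrow> real^'n \<Rightarrow> real" where
  "pd i f x = deriv (\<lambda>t. f (x + t *\<^sub>R axis i 1)) 0"

definition hessian :: "(real^'n \<Rightarrow> real) \<Rightarrow> real^'n \<Rightarrow> real^'n^'n" where
  "hessian f x = (\<chi> i j. pd i (pd j f) x)"

definition symplectic_potential ::
  "nat \<Rightarrow> (nat \<Rightarrow> real^'n) \<Rightarrow> (nat \<Rightarrow> real) \<Rightarrow> (real^'n \<Rightarrow> real) \<Rightarrow> bool" where
  "symplectic_potential r \<nu> lam g \<longleftrightarrow>
     (\<exists>\<phi> \<alpha>. smooth_on_closed (polytope r \<nu> lam) \<phi> \<and> smooth_on_closed (polytope r \<nu> lam) \<alpha> \<and>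
        (\<forall>x\<in>polytope r \<nu> lam. \<alpha> x > 0) \<and>
        (\<forall>x\<in>interior (polytope r \<nu> lam).
            g x = (1/2) * (\<Sum>j<r. aff \<nu> lam j x * ln (aff \<nu> lam j x)) + \<phi> x \<and>
            (\<forall>v. v \<noteq> 0 \<longrightarrow> v \<bullet> (hessian g x *v v) > 0) \<and>
            det (hessian g x) = 1 / (\<alpha> x * (\<Prod>j<r. aff \<nu> lam j x))))"

text \<open>A point of the open dense orbit is a pair (x, theta) with x in the interior of P
  (theta taken in R^n, i.e. on the universal cover of the torus).
  Sections of L there are written f 1 (x) sqrt(.) and are represented by their coefficient
  functions f :: real^n x real^n => complex with respect to a fixed frame.\<close>

type_synonym 'n coef = "(real^'n) \<times> (real^'n) \<Rightarrow> complex"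

definition yvec :: "(real^'n \<Rightarrow> real) \<Rightarrow> real^'n \<Rightarrow> real^'n" where
  "yvec g x = (\<chi> j. pd j g x)"

definition hfun :: "(real^'n \<Rightarrow> real) \<Rightarrow> real^'n \<Rightarrow> real" where
  "hfun g x = x \<bullet> yvec g x - g x"

definition dtheta :: "'n::finite \<Rightarrow> 'n coef \<Rightarrow> 'n coef" where
  "dtheta j F p = vector_derivative (\<lambda>t. F (fst p, snd p + t *\<^sub>R axis j 1)) (at 0)"

definition Xg :: "(real^'n::finite \<Rightarrow> real) \<Rightarrow> 'n coef \<Rightarrow> 'n coef" where
  "Xg g F p = - (\<Sum>j\<in>UNIV. complex_of_real (yvec g (fst p) $ j) * dtheta j F p)"

definition ghat :: "(real^'n \<Rightarrow> real) \<Rightarrow> 'n coef \<Rightarrow> 'n coef" where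
  "ghat g F p = \<i> * Xg g F p - complex_of_real (hfun g (fst p)) * F p"

definition lattice_pts :: "nat \<Rightarrow> (nat \<Rightarrow> real^'n) \<Rightarrow> (nat \<Rightarrow> real) \<Rightarrow> (real^'n) set" where
  "lattice_pts r \<nu> lam = {m \<in> polytope r \<nu> lam. int_vec m}"

text \<open>e^{i m.theta} (coefficient w.r.t. 1 (x) sqrt(dTheta)), on the open orbit.\<close>
definition echar :: "nat \<Rightarrow> (nat \<Rightarrow> real^'n) \<Rightarrow> (nat \<Rightarrow> real) \<Rightarrow> real^'n \<Rightarrow> 'n coef" where
  "echar r \<nu> lam m p = (if fst p \<in> interior (polytope r \<nu> lam)
      then exp (\<i> * complex_of_real (m \<bullet> snd p)) else 0)"

text \<open>sigma^m = w^m e^{-h} 1 (x) sqrt(dZ), w^m = e^{m.(y + i theta)};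
  coefficient w.r.t. 1 (x) sqrt(dZ).\<close>
definition sigma :: "nat \<Rightarrow> (nat \<Rightarrow> real^'n) \<Rightarrow> (nat \<Rightarrow> real) \<Rightarrow> (real^'n \<Rightarrow> real) \<Rightarrow> real^'n \<Rightarrow> 'n coef" where
  "sigma r \<nu> lam g m p = (if fst p \<in> interior (polytope r \<nu> lam)
      then exp (complex_of_real (m \<bullet> yvec g (fst p)) + \<i> * complex_of_real (m \<bullet> snd p))
           * exp (- complex_of_real (hfun g (fst p)))
      else 0)"

definition cspan_fun :: "'a set \<Rightarrow> ('a \<Rightarrow> 'n coef) \<Rightarrow> 'n coef set" where
  "cspan_fun M e = {F. \<exists>c. F = (\<lambda>p. \<Sum>m\<in>M. c m * e m p)}"

text \<open>A_P (coefficients w.r.t. 1 (x) sqrt(dTheta)) and H_{P_g} (coefficients w.r.t. 1 (x) sqrt(dZ)).\<close>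
definition A_P :: "nat \<Rightarrow> (nat \<Rightarrow> real^'n::finite) \<Rightarrow> (nat \<Rightarrow> real) \<Rightarrow> 'n coef set" where "A_P r \<nu> lam = cspan_fun (lattice_pts r \<nu> lam) (echar r \<nu> lam)"
definition H_Pg :: "nat \<Rightarrow> (nat \<Rightarrow> real^'n::finite) \<Rightarrow> (nat \<Rightarrow> real) \<Rightarrow> (real^'n \<Rightarrow> real) \<Rightarrow> 'n coef set" where "H_Pg r \<nu> lam g = cspan_fun (lattice_pts r \<nu> lam) (sigma r \<nu> lam g)"

text \<open>e^{ghat} (x) e^{i L_{X_g}} on coefficient functions: since e^{i L_{X_g}} sqrt(dTheta) = sqrt(dZ),
  the coefficient f w.r.t. 1 (x) sqrt(dTheta) is sent to the coefficient sum_k ghat^k f / k!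
  w.r.t. 1 (x) sqrt(dZ).\<close>
definition exp_ghat :: "nat \<Rightarrow> (nat \<Rightarrow> real^'n) \<Rightarrow> (nat \<Rightarrow> real) \<Rightarrow> (real^'n \<Rightarrow> real) \<Rightarrow> 'n coef \<Rightarrow> 'n coef" where
  "exp_ghat r \<nu> lam g F p = (if fst p \<in> interior (polytope r \<nu> lam)
      then (\<Sum>k. (ghat g ^^ k) F p / of_nat (fact k)) else 0)"

end

theory Submission imports Defs begin
definition EE :: "real^'n \<Rightarrow> (real^'n) \<times> (real^'n) \<Rightarrow> complex" where
  "EE m p = exp (\<i> * complex_of_real (m \<bullet> snd p))"

lemma dtheta_T:
  fixes M :: "(real^'n::finite) set"
  shows "dtheta j (\<lambda>p. \<Sum>m\<in>M. a m * w m (fst p) * EE m p) p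
       = (\<Sum>m\<in>M. a m * w m (fst p) * (\<i> * of_real (m$j)) * EE m p)"
proof -
  obtain x \<theta> where p: "p = (x, \<theta>)" by (cases p)
  have eq: "(\<lambda>t. \<Sum>m\<in>M. a m * w m x * EE m (x, \<theta> + t *\<^sub>R axis j 1))
     = (\<lambda>t. (\<lambda>z. \<Sum>m\<in>M. a m * w m x * exp (\<i> * of_real (m \<bullet> \<theta>) + z * (\<i> * of_real (m$j)))) (of_real t))"
    by (auto simp: EE_def inner_add_right inner_axis algebra_simps intro!: sum.cong ext)
  have "((\<lambda>z. \<Sum>m\<in>M. a m * w m x * exp (\<i> * of_real (m \<bullet> \<theta>) + z * (\<i> * of_real (m$j))))
      has_field_derivative (\<Sum>m\<in>M. a m * w m x * (\<i> * of_real (m$j)) * EE m (x,\<theta>))) (at (of_real 0))"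
    by (auto intro!: derivative_eq_intros sum.cong simp: EE_def)
  hence "((\<lambda>t. \<Sum>m\<in>M. a m * w m x * EE m (x, \<theta> + t *\<^sub>R axis j 1)) has_vector_derivative
        (\<Sum>m\<in>M. a m * w m x * (\<i> * of_real (m$j)) * EE m (x,\<theta>))) (at 0)"
    unfolding eq by (rule has_vector_derivative_real_field)
  thus ?thesis unfolding dtheta_def p by (simp add: vector_derivative_at)
qed
definition cc :: "(real^'n \<Rightarrow> real) \<Rightarrow> real^'n \<Rightarrow> real^'n \<Rightarrow> complex" where
  "cc g m x = complex_of_real (m \<bullet> yvec g x - hfun g x)"

lemma ghat_T:
  fixes M :: "(real^'n::finite) set"
  shows "ghat g (\<lambda>p. \<Sum>m\<in>M. a m * w m (fst p) * EE m p)
       = (\<lambda>p. \<Sum>m\<in>M. a m * (w m (fst p) * cc g m (fst p)) * EE m p)"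
proof
  fix p
  have dy: "(\<Sum>j\<in>UNIV. complex_of_real (yvec g (fst p) $ j) * (a m * w m (fst p) * (\<i> * of_real (m$j)) * EE m p))
     = \<i> * a m * w m (fst p) * EE m p * of_real (m \<bullet> yvec g (fst p))" for m
    by (simp add: inner_vec_def sum_distrib_left algebra_simps)
  have "ghat g (\<lambda>p. \<Sum>m\<in>M. a m * w m (fst p) * EE m p) p
     = \<i> * (- (\<Sum>j\<in>UNIV. complex_of_real (yvec g (fst p) $ j) *
          (\<Sum>m\<in>M. a m * w m (fst p) * (\<i> * of_real (m$j)) * EE m p)))
       - of_real (hfun g (fst p)) * (\<Sum>m\<in>M. a m * w m (fst p) * EE m p)"
    unfolding ghat_def Xg_def by (simp add: dtheta_T)
  also have "\<dots> = \<i> * (- (\<Sum>m\<in>M. \<i> * a m * w m (fst p) * EE m p * of_real (m \<bullet> yvec g (fst p))))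
       - of_real (hfun g (fst p)) * (\<Sum>m\<in>M. a m * w m (fst p) * EE m p)"
  proof -
    have "(\<Sum>j\<in>UNIV. complex_of_real (yvec g (fst p) $ j) *
          (\<Sum>m\<in>M. a m * w m (fst p) * (\<i> * of_real (m$j)) * EE m p))
        = (\<Sum>m\<in>M. \<Sum>j\<in>UNIV. complex_of_real (yvec g (fst p) $ j) * (a m * w m (fst p) * (\<i> * of_real (m$j)) * EE m p))"
      by (simp only: sum_distrib_left sum.swap[of _ UNIV M])
    also have "\<dots> = (\<Sum>m\<in>M. \<i> * a m * w m (fst p) * EE m p * of_real (m \<bullet> yvec g (fst p)))"
      by (simp only: dy)
    finally show ?thesis by simp
  qed
  also have "\<dots> = (\<Sum>m\<in>M. a m * (w m (fst p) * cc g m (fst p)) * EE m p)"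
    by (simp add: cc_def sum_distrib_left sum_subtractf[symmetric] algebra_simps sum_negf[symmetric])
  finally show "ghat g (\<lambda>p. \<Sum>m\<in>M. a m * w m (fst p) * EE m p) p = (\<Sum>m\<in>M. a m * (w m (fst p) * cc g m (fst p)) * EE m p)" .
qed

lemma ghat_pow:
  fixes M :: "(real^'n::finite) set"
  shows "(ghat g ^^ k) (\<lambda>p. \<Sum>m\<in>M. a m * w m (fst p) * EE m p)
       = (\<lambda>p. \<Sum>m\<in>M. a m * (w m (fst p) * cc g m (fst p) ^ k) * EE m p)"
proof (induction k)
  case 0 then show ?case by simp
next
  case (Suc k)
  have "(ghat g ^^ Suc k) (\<lambda>p. \<Sum>m\<in>M. a m * w m (fst p) * EE m p)
     = ghat g (\<lambda>p. \<Sum>m\<in>M. a m * (w m (fst p) * cc g m (fst p) ^ k) * EE m p)"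
    using Suc by simp
  also have "\<dots> = (\<lambda>p. \<Sum>m\<in>M. a m * ((w m (fst p) * cc g m (fst p) ^ k) * cc g m (fst p)) * EE m p)"
    by (rule ghat_T[of g a "\<lambda>m x. w m x * cc g m x ^ k"])
  finally show ?case by (simp add: algebra_simps)
qed
lemma char_indep:
  fixes M :: "(real^'n::finite) set"
  assumes "finite M"
  shows "\<forall>a. (\<forall>\<theta>. (\<Sum>m\<in>M. a m * exp (\<i> * of_real (m \<bullet> \<theta>))) = 0) \<longrightarrow> (\<forall>m\<in>M. a m = 0)"
  using assms
proof (induction M rule: finite_induct)
  case empty thus ?case by simp
next
  case (insert m1 M)
  show ?case
  proof (intro allI impI)
    fix a :: "real^'n \<Rightarrow> complex"
    assume H: "\<forall>\<theta>. (\<Sum>m\<in>insert m1 M. a m * exp (\<i> * of_real (m \<bullet> \<theta>))) = 0"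
    have aM: "\<forall>m\<in>M. a m = 0"
    proof
      fix m0 assume m0: "m0 \<in> M"
      hence ne: "m0 \<noteq> m1" using insert by auto
      define d where "d = m0 - m1"
      define s where "s = (pi / (d \<bullet> d)) *\<^sub>R d"
      have dd: "d \<bullet> d > 0" using ne d_def by simp
      have ms: "m0 \<bullet> s = m1 \<bullet> s + pi"
      proof -
        have "m0 \<bullet> s - m1 \<bullet> s = d \<bullet> s" by (simp add: d_def inner_diff_left)
        also have "\<dots> = pi" using dd by (simp add: s_def)
        finally show ?thesis by simp
      qed
      define b where "b m = a m * (exp (\<i> * of_real (m \<bullet> s)) - exp (\<i> * of_real (m1 \<bullet> s)))" for m
      have "\<forall>\<theta>. (\<Sum>m\<in>M. b m * exp (\<i> * of_real (m \<bullet> \<theta>))) = 0"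
      proof
        fix \<theta>
        have h1: "(\<Sum>m\<in>insert m1 M. a m * exp (\<i> * of_real (m \<bullet> (\<theta> + s)))) = 0" using H by blast
        have h2: "(\<Sum>m\<in>insert m1 M. a m * exp (\<i> * of_real (m \<bullet> \<theta>))) = 0" using H by blast
        have "(\<Sum>m\<in>insert m1 M. b m * exp (\<i> * of_real (m \<bullet> \<theta>)))
            = (\<Sum>m\<in>insert m1 M. a m * exp (\<i> * of_real (m \<bullet> (\<theta> + s))))
              - exp (\<i> * of_real (m1 \<bullet> s)) * (\<Sum>m\<in>insert m1 M. a m * exp (\<i> * of_real (m \<bullet> \<theta>)))"
          by (simp add: b_def sum_distrib_left sum_subtractf[symmetric] inner_add_right
               distrib_left exp_add algebra_simps)
        also have "\<dots> = 0" using h1 h2 by simp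
        finally have "(\<Sum>m\<in>insert m1 M. b m * exp (\<i> * of_real (m \<bullet> \<theta>))) = 0" .
        moreover have "b m1 = 0" by (simp add: b_def)
        ultimately show "(\<Sum>m\<in>M. b m * exp (\<i> * of_real (m \<bullet> \<theta>))) = 0"
          using insert by simp
      qed
      hence "b m0 = 0" using insert.IH m0 by blast
      moreover have "exp (\<i> * of_real (m0 \<bullet> s)) - exp (\<i> * of_real (m1 \<bullet> s)) \<noteq> 0"
      proof -
        have "exp (\<i> * of_real (m0 \<bullet> s)) = exp (\<i> * of_real (m1 \<bullet> s)) * exp (\<i> * of_real pi)"
          by (simp add: ms distrib_left exp_add)
        also have "exp (\<i> * of_real pi) = -1" by (simp add: exp_pi_i')
        finally show ?thesis by simp
      qed
      ultimately show "a m0 = 0" by (simp add: b_def)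
    qed
    have "(\<Sum>m\<in>insert m1 M. a m * exp (\<i> * of_real (m \<bullet> 0))) = 0" using H by blast
    hence "a m1 + (\<Sum>m\<in>M. a m * exp (\<i> * of_real (m \<bullet> 0))) = 0" using insert by simp
    hence "a m1 = 0" using aM by simp
    thus "\<forall>m\<in>insert m1 M. a m = 0" using aM by simp
  qed
qed
definition ind :: "nat \<Rightarrow> (nat \<Rightarrow> real^'n) \<Rightarrow> (nat \<Rightarrow> real) \<Rightarrow> real^'n \<Rightarrow> complex" where
  "ind r \<nu> lam x = (if x \<in> interior (polytope r \<nu> lam) then 1 else 0)"

lemma echar_eq: "echar r \<nu> lam m p = ind r \<nu> lam (fst p) * EE m p"
  by (simp add: echar_def ind_def EE_def)

lemma sigma_eq: "sigma r \<nu> lam g m p = ind r \<nu> lam (fst p) * exp (cc g m (fst p)) * EE m p"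
  by (simp add: sigma_def ind_def EE_def cc_def exp_add exp_diff exp_minus field_simps)

lemma series_K:
  fixes M :: "(real^'n::finite) set"
  shows "(\<lambda>k. (ghat g ^^ k) (\<lambda>p. \<Sum>m\<in>M. c m * echar r \<nu> lam m p) p / of_nat (fact k))
     sums (\<Sum>m\<in>M. c m * sigma r \<nu> lam g m p)"
proof -
  have e: "(\<lambda>p. \<Sum>m\<in>M. c m * echar r \<nu> lam m p) = (\<lambda>p. \<Sum>m\<in>M. c m * ind r \<nu> lam (fst p) * EE m p)"
    by (simp add: echar_eq mult.assoc)
  have t: "(ghat g ^^ k) (\<lambda>p. \<Sum>m\<in>M. c m * echar r \<nu> lam m p) p / of_nat (fact k)
     = (\<Sum>m\<in>M. (c m * ind r \<nu> lam (fst p) * EE m p) * (cc g m (fst p) ^ k / of_nat (fact k)))" for k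
    unfolding e using ghat_pow[where g=g and k=k and M=M and a=c and w="\<lambda>m. ind r \<nu> lam"]
    by (simp add: sum_divide_distrib algebra_simps)
  have "(\<lambda>k. cc g m (fst p) ^ k / of_nat (fact k)) sums exp (cc g m (fst p))" for m
    using exp_converges[of "cc g m (fst p)"] by (simp add: scaleR_conv_of_real divide_inverse mult.commute)
  hence "(\<lambda>k. (c m * ind r \<nu> lam (fst p) * EE m p) * (cc g m (fst p) ^ k / of_nat (fact k)))
      sums ((c m * ind r \<nu> lam (fst p) * EE m p) * exp (cc g m (fst p)))" for m
    by (rule sums_mult)
  hence "(\<lambda>k. \<Sum>m\<in>M. (c m * ind r \<nu> lam (fst p) * EE m p) * (cc g m (fst p) ^ k / of_nat (fact k)))
      sums (\<Sum>m\<in>M. (c m * ind r \<nu> lam (fst p) * EE m p) * exp (cc g m (fst p)))"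
    by (rule sums_sum)
  thus ?thesis unfolding t by (simp add: sigma_eq algebra_simps)
qed

lemma exp_K:
  fixes M :: "(real^'n::finite) set"
  shows "exp_ghat r \<nu> lam g (\<lambda>p. \<Sum>m\<in>M. c m * echar r \<nu> lam m p)
     = (\<lambda>p. \<Sum>m\<in>M. c m * sigma r \<nu> lam g m p)"
proof
  fix p
  show "exp_ghat r \<nu> lam g (\<lambda>p. \<Sum>m\<in>M. c m * echar r \<nu> lam m p) p = (\<Sum>m\<in>M. c m * sigma r \<nu> lam g m p)"
  proof (cases "fst p \<in> interior (polytope r \<nu> lam)")
    case True
    then show ?thesis unfolding exp_ghat_def using series_K[where g=g and M=M and c=c and r=r and \<nu>=\<nu> and lam=lam and p=p]
      by (simp add: sums_iff)
  next
    case False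
    then show ?thesis by (simp add: exp_ghat_def sigma_def)
  qed
qed

theorem mainTheorem7:
  fixes r :: nat and \<nu> :: "nat \<Rightarrow> real^'n" and lam :: "nat \<Rightarrow> real" and g :: "real^'n \<Rightarrow> real"
  assumes "delzant r \<nu> lam"
    and "\<forall>j<r. lam j - 1/2 \<in> \<int>"
    and "symplectic_potential r \<nu> lam g"
  shows "(\<forall>F\<in>A_P r \<nu> lam. \<forall>p. fst p \<in> interior (polytope r \<nu> lam) \<longrightarrow>
            summable (\<lambda>k. (ghat g ^^ k) F p / of_nat (fact k)))
    \<and> (\<forall>F\<in>A_P r \<nu> lam. \<forall>G\<in>A_P r \<nu> lam. \<forall>a b::complex.
            exp_ghat r \<nu> lam g (\<lambda>p. a * F p + b * G p)
              = (\<lambda>p. a * exp_ghat r \<nu> lam g F p + b * exp_ghat r \<nu> lam g G p))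
    \<and> bij_betw (exp_ghat r \<nu> lam g) (A_P r \<nu> lam) (H_Pg r \<nu> lam g)
    \<and> (\<forall>m\<in>lattice_pts r \<nu> lam. exp_ghat r \<nu> lam g (echar r \<nu> lam m) = sigma r \<nu> lam g m)"
proof (intro conjI)
  let ?L = "lattice_pts r \<nu> lam"
  show "\<forall>F\<in>A_P r \<nu> lam. \<forall>p. fst p \<in> interior (polytope r \<nu> lam) \<longrightarrow>
            summable (\<lambda>k. (ghat g ^^ k) F p / of_nat (fact k))"
    unfolding A_P_def cspan_fun_def using series_K sums_summable by blast
  show "\<forall>F\<in>A_P r \<nu> lam. \<forall>G\<in>A_P r \<nu> lam. \<forall>a b::complex.
            exp_ghat r \<nu> lam g (\<lambda>p. a * F p + b * G p)
              = (\<lambda>p. a * exp_ghat r \<nu> lam g F p + b * exp_ghat r \<nu> lam g G p)"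
  proof (intro ballI allI)
    fix F G a b
    assume "F \<in> A_P r \<nu> lam" "G \<in> A_P r \<nu> lam"
    then obtain c d where F: "F = (\<lambda>p. \<Sum>m\<in>?L. c m * echar r \<nu> lam m p)"
      and G: "G = (\<lambda>p. \<Sum>m\<in>?L. d m * echar r \<nu> lam m p)"
      unfolding A_P_def cspan_fun_def by blast
    have e: "(\<lambda>p. a * F p + b * G p) = (\<lambda>p. \<Sum>m\<in>?L. (a * c m + b * d m) * echar r \<nu> lam m p)"
      by (simp add: F G sum_distrib_left sum.distrib algebra_simps)
    show "exp_ghat r \<nu> lam g (\<lambda>p. a * F p + b * G p)
              = (\<lambda>p. a * exp_ghat r \<nu> lam g F p + b * exp_ghat r \<nu> lam g G p)"
      unfolding e exp_K unfolding F G exp_K by (simp add: sum_distrib_left sum.distrib algebra_simps)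
  qed
  show "\<forall>m\<in>?L. exp_ghat r \<nu> lam g (echar r \<nu> lam m) = sigma r \<nu> lam g m"
  proof
    fix m
    have "echar r \<nu> lam m = (\<lambda>p. \<Sum>m'\<in>{m}. 1 * echar r \<nu> lam m' p)" by simp
    hence "exp_ghat r \<nu> lam g (echar r \<nu> lam m) = (\<lambda>p. \<Sum>m'\<in>{m}. 1 * sigma r \<nu> lam g m' p)"
      by (simp only: exp_K)
    thus "exp_ghat r \<nu> lam g (echar r \<nu> lam m) = sigma r \<nu> lam g m" by simp
  qed
  show "bij_betw (exp_ghat r \<nu> lam g) (A_P r \<nu> lam) (H_Pg r \<nu> lam g)"
    unfolding bij_betw_def
  proof
    show "exp_ghat r \<nu> lam g ` A_P r \<nu> lam = H_Pg r \<nu> lam g"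
      unfolding A_P_def H_Pg_def cspan_fun_def
    proof (auto simp: exp_K)
      fix c :: "real^'n \<Rightarrow> complex"
      show "(\<lambda>p. \<Sum>m\<in>?L. c m * sigma r \<nu> lam g m p) \<in> exp_ghat r \<nu> lam g ` {F. \<exists>c. F = (\<lambda>p. \<Sum>m\<in>?L. c m * echar r \<nu> lam m p)}"
        by (rule image_eqI[where x="\<lambda>p. \<Sum>m\<in>?L. c m * echar r \<nu> lam m p"]) (auto simp: exp_K)
    qed
    show "inj_on (exp_ghat r \<nu> lam g) (A_P r \<nu> lam)"
    proof
      fix F G
      assume "F \<in> A_P r \<nu> lam" "G \<in> A_P r \<nu> lam" and eq: "exp_ghat r \<nu> lam g F = exp_ghat r \<nu> lam g G"
      then obtain c d where F: "F = (\<lambda>p. \<Sum>m\<in>?L. c m * echar r \<nu> lam m p)"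
        and G: "G = (\<lambda>p. \<Sum>m\<in>?L. d m * echar r \<nu> lam m p)"
        unfolding A_P_def cspan_fun_def by blast
      show "F = G"
      proof (cases "finite ?L")
        case False thus ?thesis by (simp add: F G)
      next
        case fin: True
        show ?thesis
        proof
          fix p :: "(real^'n) \<times> (real^'n)"
          obtain x \<theta> where p: "p = (x, \<theta>)" by (cases p)
          show "F p = G p"
          proof (cases "x \<in> interior (polytope r \<nu> lam)")
            case False thus ?thesis by (simp add: F G p echar_def)
          next
            case True
            have "\<forall>\<theta>'. (\<Sum>m\<in>?L. ((c m - d m) * exp (cc g m x)) * exp (\<i> * of_real (m \<bullet> \<theta>'))) = 0"
            proof
              fix \<theta>'
              have "(\<Sum>m\<in>?L. c m * sigma r \<nu> lam g m (x,\<theta>')) = (\<Sum>m\<in>?L. d m * sigma r \<nu> lam g m (x,\<theta>'))"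
                using eq unfolding F G exp_K by metis
              thus "(\<Sum>m\<in>?L. ((c m - d m) * exp (cc g m x)) * exp (\<i> * of_real (m \<bullet> \<theta>'))) = 0"
                using True by (simp add: sigma_eq ind_def EE_def algebra_simps sum_subtractf)
            qed
            hence z: "\<forall>m\<in>?L. (c m - d m) * exp (cc g m x) = 0"
              using char_indep[OF fin, rule_format, of "\<lambda>m. (c m - d m) * exp (cc g m x)"] by blast
            have "\<forall>m\<in>?L. c m = d m" using z by simp
            thus ?thesis by (simp add: F G)
          qed
        qed
      qed
    qed
  qed
qed

end
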